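(* Let $\div$ be a belief change operator satisfying (C1)–(C7) and (C8), (C9). Then the following are equivalent: (a) $\div$ satisfies, for all epistemic states $\Psi$ and formulas $\alpha,\beta,\gamma$: (C10) if $\neg\alpha\models\gamma$ then $\Psi\div\beta\models\gamma$ implies $\Psi\div\alpha\div\beta\models\gamma$; and (C11) if $\alpha\models\gamma$ then $\Psi\div\alpha\div\beta\models\gamma$ implies $\Psi\div\beta\models\gamma$. (b) There is a faithful assignment $\Psi\mapsto\le_\Psi$ with $[\![\Psi\div\alpha]\!]=[\![\Psi]\!]\cup\min([\![\neg\alpha]\!],\le_\Psi)$ for all $\Psi,\alpha$, which satisfies for all $\Psi,\alpha$ and worlds $\omega_1\in[\![\neg\alpha]\!]$, $\omega_2\in[\![\alpha]\!]$: (CR10) $\omega_1<_\Psi\omega_2\Rightarrow\omega_1<_{\Psi\div\alpha}\omega_2$; (CR11) $\omega_1\le_\Psi\omega_2\Rightarrow\omega_1\le_{\Psi\div\alpha}\omega_2$.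
   Context: $\Sigma$ is a nonempty finite set of propositional variables, $\mathcal{L}$ the propositional language over $\Sigma$, $\Omega$ the set of worlds. $[\![\alpha]\!]$ is the set of models of $\alpha$; for a set $X$ of formulas $[\![X]\!]$ is the set of worlds satisfying all of $X$; $Cn(X)=\{\beta\mid X\models\beta\}$. $\mathcal{E}$ is a set of epistemic states; each $\Psi\in\mathcal{E}$ has a deductively closed belief set $\mathrm{Bel}(\Psi)\subseteq\mathcal{L}$; $\Psi\models\alpha$ iff $\alpha\in\mathrm{Bel}(\Psi)$; $[\![\Psi]\!]=[\![\mathrm{Bel}(\Psi)]\!]$. A belief change operator is a map $\div:\mathcal{E}\times\mathcal{L}\to\mathcal{E}$; $\Psi\div\alpha\div\beta$ means $(\Psi\div\alpha)\div\beta$. Postulates, for all $\Psi,\alpha,\beta$: (C1) $\mathrm{Bel}(\Psi\div\alpha)\subseteq\mathrm{Bel}(\Psi)$; (C2) if $\alpha\notin\mathrm{Bel}(\Psi)$ then $\mathrm{Bel}(\Psi)\subseteq\mathrm{Bel}(\Psi\div\alpha)$; (C3) if $\alpha\not\equiv\top$ then $\alpha\notin\mathrm{Bel}(\Psi\div\alpha)$; (C4) $\mathrm{Bel}(\Psi)\subseteq Cn(\mathrm{Bel}(\Psi\div\alpha)\cup\{\alpha\})$; (C5) if $\alpha\equiv\beta$ then $\mathrm{Bel}(\Psi\div\alpha)=\mathrm{Bel}(\Psi\div\beta)$; (C6) $\mathrm{Bel}(\Psi\div\alpha)\cap\mathrm{Bel}(\Psi\div\beta)\subseteq\mathrm{Bel}(\Psi\div(\alpha\land\beta))$;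 (C7) if $\beta\notin\mathrm{Bel}(\Psi\div(\alpha\land\beta))$ then $\mathrm{Bel}(\Psi\div(\alpha\land\beta))\subseteq\mathrm{Bel}(\Psi\div\beta)$; (C8) if $\neg\alpha\models\beta$ then $\mathrm{Bel}(\Psi\div\alpha\div\beta) =_\alpha \mathrm{Bel}(\Psi\div\beta)$; (C9) if $\alpha\models\beta$ then $\mathrm{Bel}(\Psi\div\alpha\div\beta) =_{\neg\beta} \mathrm{Bel}(\Psi\div\beta)$. A belief change operator satisfying (C1)–(C7) is called an AGM contraction operator for epistemic states. For a total preorder $\le$ on $\Omega$ and $\Omega'\subseteq\Omega$, $\min(\Omega',\le)=\{\omega\in\Omega'\mid \omega\le\omega' \text{ for all }\omega'\in\Omega'\}$; $<$ is the strict part and $\simeq$ the induced equivalence. A faithful assignment maps each $\Psi$ to a total preorder $\le_\Psi$ on $\Omega$ with (FA1) $\omega_1,\omega_2\in[\![\Psi]\!]\Rightarrow\omega_1\simeq_\Psi\omega_2$ and (FA2) $\omega_1\in[\![\Psi]\!],\omega_2\notin[\![\Psi]\!]\Rightarrow\omega_1<_\Psi\omega_2$. Known fact: $\div$ satisfies (C1)–(C7) iff there is a faithful assignment with $[\![\Psi\div\alpha]\!]=[\![\Psi]\!]\cup\min([\![\neg\alpha]\!],\le_\Psi)$ for all $\Psi,\alpha$. $\alpha$-equivalence: for $\Omega_1,\Omega_2\subseteq\Omega$, $\Omega_1=_\alpha\Omega_2$ iff $\Omega_1\cap[\![\alpha]\!]=\Omega_2\cap[\![\alpha]\!]$; for sets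 of formulas $X=_\alpha Y$ iff $[\![X]\!]=_\alpha[\![Y]\!]$. *)

theory Defs
  imports Main
begin

text \<open>The signature Sigma is the (finite, automatically nonempty) type 'v.
  Worlds are interpretations 'v => bool.\<close>

datatype 'v fm =
    Atom 'v
  | Top
  | Bot
  | Neg "'v fm"
  | Conj "'v fm" "'v fm"
  | Disj "'v fm" "'v fm"
  | Imp "'v fm" "'v fm"

type_synonym 'v world = "'v \<Rightarrow> bool"

fun sat :: "'v world \<Rightarrow> 'v fm \<Rightarrow> bool" where
  "sat w (Atom p) = w p"
| "sat w Top = True"
| "sat w Bot = False"
| "sat w (Neg a) = (\<not> sat w a)"
| "sat w (Conj a b) = (sat w a \<and> sat w b)"
| "sat w (Disj a b) = (sat w a \<or> sat w b)"
| "sat w (Imp a b) = (sat w a \<longrightarrow> sat w b)"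

definition models :: "'v fm \<Rightarrow> 'v world set" where
  "models a = {w. sat w a}"

definition modelsS :: "'v fm set \<Rightarrow> 'v world set" where
  "modelsS X = {w. \<forall>a\<in>X. sat w a}"

definition entails :: "'v fm set \<Rightarrow> 'v fm \<Rightarrow> bool" where
  "entails X b \<longleftrightarrow> modelsS X \<subseteq> models b"

definition Cn :: "'v fm set \<Rightarrow> 'v fm set" where
  "Cn X = {b. entails X b}"

definition fentails :: "'v fm \<Rightarrow> 'v fm \<Rightarrow> bool" where
  "fentails a b \<longleftrightarrow> models a \<subseteq> models b"

definition fequiv :: "'v fm \<Rightarrow> 'v fm \<Rightarrow> bool" where
  "fequiv a b \<longleftrightarrow> models a = models b"

definition aeq :: "'v fm \<Rightarrow> 'v fm set \<Rightarrow> 'v fm set \<Rightarrow> bool" where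
  "aeq a X Y \<longleftrightarrow> modelsS X \<inter> models a = modelsS Y \<inter> models a"

text \<open>Epistemic states form the type 'e; Bel gives the belief set.
  [[Psi]] = modelsS (Bel Psi).  A belief change operator is contr :: 'e => 'v fm => 'e.\<close>

definition deductively_closed_bel :: "('e \<Rightarrow> 'v fm set) \<Rightarrow> bool" where
  "deductively_closed_bel Bel \<longleftrightarrow> (\<forall>\<Psi>. Cn (Bel \<Psi>) = Bel \<Psi>)"

definition C1 :: "('e \<Rightarrow> 'v fm set) \<Rightarrow> ('e \<Rightarrow> 'v fm \<Rightarrow> 'e) \<Rightarrow> bool" where
  "C1 Bel c \<longleftrightarrow> (\<forall>\<Psi> a. Bel (c \<Psi> a) \<subseteq> Bel \<Psi>)"

definition C2 :: "('e \<Rightarrow> 'v fm set) \<Rightarrow> ('e \<Rightarrow> 'v fm \<Rightarrow> 'e) \<Rightarrow> bool" where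
  "C2 Bel c \<longleftrightarrow> (\<forall>\<Psi> a. a \<notin> Bel \<Psi> \<longrightarrow> Bel \<Psi> \<subseteq> Bel (c \<Psi> a))"

definition C3 :: "('e \<Rightarrow> 'v fm set) \<Rightarrow> ('e \<Rightarrow> 'v fm \<Rightarrow> 'e) \<Rightarrow> bool" where
  "C3 Bel c \<longleftrightarrow> (\<forall>\<Psi> a. \<not> fequiv a Top \<longrightarrow> a \<notin> Bel (c \<Psi> a))"

definition C4 :: "('e \<Rightarrow> 'v fm set) \<Rightarrow> ('e \<Rightarrow> 'v fm \<Rightarrow> 'e) \<Rightarrow> bool" where
  "C4 Bel c \<longleftrightarrow> (\<forall>\<Psi> a. Bel \<Psi> \<subseteq> Cn (Bel (c \<Psi> a) \<union> {a}))"

definition C5 :: "('e \<Rightarrow> 'v fm set) \<Rightarrow> ('e \<Rightarrow> 'v fm \<Rightarrow> 'e) \<Rightarrow> bool" where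
  "C5 Bel c \<longleftrightarrow> (\<forall>\<Psi> a b. fequiv a b \<longrightarrow> Bel (c \<Psi> a) = Bel (c \<Psi> b))"

definition C6 :: "('e \<Rightarrow> 'v fm set) \<Rightarrow> ('e \<Rightarrow> 'v fm \<Rightarrow> 'e) \<Rightarrow> bool" where
  "C6 Bel c \<longleftrightarrow> (\<forall>\<Psi> a b. Bel (c \<Psi> a) \<inter> Bel (c \<Psi> b) \<subseteq> Bel (c \<Psi> (Conj a b)))"

definition C7 :: "('e \<Rightarrow> 'v fm set) \<Rightarrow> ('e \<Rightarrow> 'v fm \<Rightarrow> 'e) \<Rightarrow> bool" where
  "C7 Bel c \<longleftrightarrow> (\<forall>\<Psi> a b. b \<notin> Bel (c \<Psi> (Conj a b)) \<longrightarrow> Bel (c \<Psi> (Conj a b)) \<subseteq> Bel (c \<Psi> b))"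

definition C8 :: "('e \<Rightarrow> 'v fm set) \<Rightarrow> ('e \<Rightarrow> 'v fm \<Rightarrow> 'e) \<Rightarrow> bool" where
  "C8 Bel c \<longleftrightarrow> (\<forall>\<Psi> a b. fentails (Neg a) b \<longrightarrow> aeq a (Bel (c (c \<Psi> a) b)) (Bel (c \<Psi> b)))"

definition C9 :: "('e \<Rightarrow> 'v fm set) \<Rightarrow> ('e \<Rightarrow> 'v fm \<Rightarrow> 'e) \<Rightarrow> bool" where
  "C9 Bel c \<longleftrightarrow> (\<forall>\<Psi> a b. fentails a b \<longrightarrow> aeq (Neg b) (Bel (c (c \<Psi> a) b)) (Bel (c \<Psi> b)))"

definition C10 :: "('e \<Rightarrow> 'v fm set) \<Rightarrow> ('e \<Rightarrow> 'v fm \<Rightarrow> 'e) \<Rightarrow> bool" where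
  "C10 Bel c \<longleftrightarrow> (\<forall>\<Psi> a b g. fentails (Neg a) g \<longrightarrow> g \<in> Bel (c \<Psi> b) \<longrightarrow> g \<in> Bel (c (c \<Psi> a) b))"

definition C11 :: "('e \<Rightarrow> 'v fm set) \<Rightarrow> ('e \<Rightarrow> 'v fm \<Rightarrow> 'e) \<Rightarrow> bool" where
  "C11 Bel c \<longleftrightarrow> (\<forall>\<Psi> a b g. fentails a g \<longrightarrow> g \<in> Bel (c (c \<Psi> a) b) \<longrightarrow> g \<in> Bel (c \<Psi> b))"

definition total_preorder :: "('w \<Rightarrow> 'w \<Rightarrow> bool) \<Rightarrow> bool" where
  "total_preorder le \<longleftrightarrow> (\<forall>x y z. le x y \<longrightarrow> le y z \<longrightarrow> le x z) \<and> (\<forall>x y. le x y \<or> le y x)"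

definition minset :: "'w set \<Rightarrow> ('w \<Rightarrow> 'w \<Rightarrow> bool) \<Rightarrow> 'w set" where
  "minset S le = {w\<in>S. \<forall>w'\<in>S. le w w'}"

definition strict :: "('w \<Rightarrow> 'w \<Rightarrow> bool) \<Rightarrow> 'w \<Rightarrow> 'w \<Rightarrow> bool" where
  "strict le x y \<longleftrightarrow> le x y \<and> \<not> le y x"

definition faithful_assignment ::
  "('e \<Rightarrow> 'v fm set) \<Rightarrow> ('e \<Rightarrow> 'v world \<Rightarrow> 'v world \<Rightarrow> bool) \<Rightarrow> bool" where
  "faithful_assignment Bel le \<longleftrightarrow>
     (\<forall>\<Psi>. total_preorder (le \<Psi>)) \<and>
     (\<forall>\<Psi> w1 w2. w1 \<in> modelsS (Bel \<Psi>) \<longrightarrow> w2 \<in> modelsS (Bel \<Psi>) \<longrightarrow> le \<Psi> w1 w2 \<and> le \<Psi> w2 w1) \<and>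
     (\<forall>\<Psi> w1 w2. w1 \<in> modelsS (Bel \<Psi>) \<longrightarrow> w2 \<notin> modelsS (Bel \<Psi>) \<longrightarrow> strict (le \<Psi>) w1 w2)"

definition CR10 :: "('e \<Rightarrow> 'v fm \<Rightarrow> 'e) \<Rightarrow> ('e \<Rightarrow> 'v world \<Rightarrow> 'v world \<Rightarrow> bool) \<Rightarrow> bool" where
  "CR10 c le \<longleftrightarrow> (\<forall>\<Psi> a w1 w2. w1 \<in> models (Neg a) \<longrightarrow> w2 \<in> models a \<longrightarrow>
      strict (le \<Psi>) w1 w2 \<longrightarrow> strict (le (c \<Psi> a)) w1 w2)"

definition CR11 :: "('e \<Rightarrow> 'v fm \<Rightarrow> 'e) \<Rightarrow> ('e \<Rightarrow> 'v world \<Rightarrow> 'v world \<Rightarrow> bool) \<Rightarrow> bool" where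
  "CR11 c le \<longleftrightarrow> (\<forall>\<Psi> a w1 w2. w1 \<in> models (Neg a) \<longrightarrow> w2 \<in> models a \<longrightarrow>
      le \<Psi> w1 w2 \<longrightarrow> le (c \<Psi> a) w1 w2)"

end

theory Submission
  imports Defs
begin

lemma models_simps[simp]:
  "models (Neg a) = - models a" "models (Conj a b) = models a \<inter> models b"
  "models (Disj a b) = models a \<union> models b"
  "models Top = UNIV" "models Bot = {}" "models (Atom v) = {w. w v}"
  by (auto simp: models_def)

lemma ex_char: "finite V \<Longrightarrow> \<exists>f. models f = {w'::'v world. \<forall>v\<in>V. w' v = w v}"
proof (induction V rule: finite_induct)
  case empty
  then show ?case by (rule exI[of _ Top]) simp
next
  case (insert v V)
  then obtain f where f: "models f = {w'::'v world. \<forall>v\<in>V. w' v = w v}" by blast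
  show ?case
  proof (cases "w v")
    case True
    then show ?thesis
      by (intro exI[of _ "Conj f (Atom v)"]) (auto simp: f)
  next
    case False
    then show ?thesis
      by (intro exI[of _ "Conj f (Neg (Atom v))"]) (auto simp: f)
  qed
qed

lemma ex_form: "\<exists>f. models f = (S :: ('v::finite) world set)"
proof -
  have "finite S" by simp
  then show ?thesis
  proof (induction S rule: finite_induct)
    case empty
    then show ?case by (rule exI[of _ Bot]) simp
  next
    case (insert w S)
    then obtain f where f: "models f = S" by blast
    obtain h where h: "models h = {w'::'v world. \<forall>v\<in>UNIV. w' v = w v}"
      using ex_char[of "UNIV::'v set" w] by auto
    have "models h = {w}" unfolding h by auto
    then show ?case by (intro exI[of _ "Disj f h"]) (auto simp: f)
  qed
qed

definition form :: "('v::finite) world set \<Rightarrow> 'v fm" where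
  "form S = (SOME f. models f = S)"

lemma models_form[simp]: "models (form S) = S"
  unfolding form_def by (rule someI_ex[OF ex_form])

lemma modelsS_insert: "modelsS (insert a X) = modelsS X \<inter> models a"
  by (auto simp: modelsS_def models_def)

locale ctr =
  fixes Bel :: "'e \<Rightarrow> ('v::finite) fm set" and contr :: "'e \<Rightarrow> 'v fm \<Rightarrow> 'e"
  assumes dc: "deductively_closed_bel Bel"
    and c1: "C1 Bel contr" and c2: "C2 Bel contr" and c3: "C3 Bel contr" and c4: "C4 Bel contr"
    and c5: "C5 Bel contr" and c6: "C6 Bel contr" and c7: "C7 Bel contr"
begin

abbreviation MM where "MM \<Psi> \<equiv> modelsS (Bel \<Psi>)"

lemma bel_iff: "g \<in> Bel \<Psi> \<longleftrightarrow> MM \<Psi> \<subseteq> models g"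
proof -
  have "Cn (Bel \<Psi>) = Bel \<Psi>" using dc by (simp add: deductively_closed_bel_def)
  then show ?thesis unfolding Cn_def entails_def by blast
qed

lemma bel_sub: "Bel X \<subseteq> Bel Y \<longleftrightarrow> MM Y \<subseteq> MM X"
proof
  assume "Bel X \<subseteq> Bel Y"
  moreover have "form (MM X) \<in> Bel X" by (simp add: bel_iff)
  ultimately have "form (MM X) \<in> Bel Y" by blast
  then show "MM Y \<subseteq> MM X" by (simp add: bel_iff)
next
  assume "MM Y \<subseteq> MM X" then show "Bel X \<subseteq> Bel Y" by (auto simp: bel_iff)
qed

definition N where "N \<Psi> S = MM (contr \<Psi> (form (- S)))"

lemma N_eq: "MM (contr \<Psi> a) = N \<Psi> (models (Neg a))"
proof -
  have "fequiv a (form (- models (Neg a)))" by (simp add: fequiv_def)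
  then have "Bel (contr \<Psi> a) = Bel (contr \<Psi> (form (- models (Neg a))))"
    using c5 by (simp add: C5_def)
  then show ?thesis by (simp add: N_def)
qed

lemma N1: "MM \<Psi> \<subseteq> N \<Psi> S"
  using c1 by (simp add: C1_def N_def bel_sub)

lemma N4: "N \<Psi> S - S \<subseteq> MM \<Psi>"
proof -
  have "form (MM \<Psi>) \<in> Bel \<Psi>" by (simp add: bel_iff)
  then have "form (MM \<Psi>) \<in> Cn (Bel (contr \<Psi> (form (- S))) \<union> {form (- S)})"
    using c4 by (auto simp: C4_def)
  then show ?thesis by (auto simp: Cn_def entails_def modelsS_insert N_def)
qed

lemma N3: "S \<noteq> {} \<Longrightarrow> N \<Psi> S \<inter> S \<noteq> {}"
proof -
  assume "S \<noteq> {}"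
  then have "\<not> fequiv (form (- S)) Top" by (auto simp: fequiv_def)
  then have "form (- S) \<notin> Bel (contr \<Psi> (form (- S)))" using c3 by (auto simp: C3_def)
  then show ?thesis by (auto simp: bel_iff N_def)
qed

lemma N2: "S \<inter> MM \<Psi> \<noteq> {} \<Longrightarrow> N \<Psi> S = MM \<Psi>"
proof -
  assume "S \<inter> MM \<Psi> \<noteq> {}"
  then have "form (- S) \<notin> Bel \<Psi>" by (auto simp: bel_iff)
  then have "Bel \<Psi> \<subseteq> Bel (contr \<Psi> (form (- S)))" using c2 by (auto simp: C2_def)
  then show ?thesis using N1[of \<Psi> S] by (auto simp: bel_sub N_def)
qed

lemma N6: assumes "S \<subseteq> T" shows "N \<Psi> T \<inter> S \<subseteq> N \<Psi> S"
proof -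
  let ?a = "form (- S)" and ?c = "form (- (T - S))"
  let ?g = "form (N \<Psi> S \<union> N \<Psi> (T - S))"
  have "?g \<in> Bel (contr \<Psi> ?a)" "?g \<in> Bel (contr \<Psi> ?c)" by (auto simp: bel_iff N_def)
  then have "?g \<in> Bel (contr \<Psi> (Conj ?a ?c))" using c6 by (auto simp: C6_def)
  then have "MM (contr \<Psi> (Conj ?a ?c)) \<subseteq> N \<Psi> S \<union> N \<Psi> (T - S)" by (simp add: bel_iff)
  moreover have "models (Neg (Conj ?a ?c)) = T" using assms by auto
  ultimately have "N \<Psi> T \<subseteq> N \<Psi> S \<union> N \<Psi> (T - S)" using N_eq by metis
  moreover have "N \<Psi> (T - S) \<inter> S \<subseteq> N \<Psi> S" using N4[of \<Psi> "T - S"] N1[of \<Psi> S] by blast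
  ultimately show ?thesis by blast
qed

lemma N7: assumes "S \<subseteq> T" "N \<Psi> T \<inter> S \<noteq> {}" shows "N \<Psi> S \<subseteq> N \<Psi> T"
proof -
  let ?a = "form (- T)" and ?b = "form (- S)"
  have e: "models (Neg (Conj ?a ?b)) = T" using assms(1) by auto
  have "\<not> N \<Psi> T \<subseteq> - S" using assms(2) by blast
  then have "?b \<notin> Bel (contr \<Psi> (Conj ?a ?b))"
    unfolding bel_iff N_eq[of \<Psi> "Conj ?a ?b"] e by simp
  then have "Bel (contr \<Psi> (Conj ?a ?b)) \<subseteq> Bel (contr \<Psi> ?b)" using c7 by (auto simp: C7_def)
  then show ?thesis unfolding bel_sub N_eq[of \<Psi> "Conj ?a ?b"] e by (simp add: N_def)
qed

definition L where "L \<Psi> w1 w2 \<longleftrightarrow> w1 \<in> N \<Psi> {w1, w2}"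

lemma N_min: "N \<Psi> S = MM \<Psi> \<union> minset S (L \<Psi>)"
proof
  show "N \<Psi> S \<subseteq> MM \<Psi> \<union> minset S (L \<Psi>)"
  proof
    fix w assume w: "w \<in> N \<Psi> S"
    show "w \<in> MM \<Psi> \<union> minset S (L \<Psi>)"
    proof (cases "w \<in> S")
      case False then show ?thesis using w N4[of \<Psi> S] by blast
    next
      case True
      have "L \<Psi> w w'" if "w' \<in> S" for w'
        using N6[of "{w, w'}" S \<Psi>] True that w by (auto simp: L_def)
      then show ?thesis using True by (auto simp: minset_def)
    qed
  qed
next
  show "MM \<Psi> \<union> minset S (L \<Psi>) \<subseteq> N \<Psi> S"
  proof
    fix w assume "w \<in> MM \<Psi> \<union> minset S (L \<Psi>)"
    then show "w \<in> N \<Psi> S"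
    proof
      assume "w \<in> MM \<Psi>" then show ?thesis using N1 by blast
    next
      assume w: "w \<in> minset S (L \<Psi>)"
      then have "S \<noteq> {}" by (auto simp: minset_def)
      then obtain w0 where w0: "w0 \<in> N \<Psi> S" "w0 \<in> S" using N3 by blast
      have "{w, w0} \<subseteq> S" using w w0 by (auto simp: minset_def)
      moreover have "N \<Psi> S \<inter> {w, w0} \<noteq> {}" using w0 by blast
      ultimately have "N \<Psi> {w, w0} \<subseteq> N \<Psi> S" by (rule N7)
      moreover have "w \<in> N \<Psi> {w, w0}" using w w0 by (auto simp: minset_def L_def)
      ultimately show ?thesis by blast
    qed
  qed
qed

lemma rep_L: "MM (contr \<Psi> a) = MM \<Psi> \<union> minset (models (Neg a)) (L \<Psi>)"
  using N_eq N_min by metis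

lemma L_total: "L \<Psi> x y \<or> L \<Psi> y x"
  using N3[of "{x, y}" \<Psi>] by (auto simp: L_def insert_commute)

lemma L_up: assumes "x \<in> N \<Psi> S" "x \<in> S" "y \<in> S" "L \<Psi> y x" shows "y \<in> N \<Psi> S"
proof -
  have "N \<Psi> {y, x} \<subseteq> N \<Psi> S" using assms by (intro N7) auto
  then show ?thesis using assms(4) by (auto simp: L_def)
qed

lemma L_trans: assumes "L \<Psi> x y" "L \<Psi> y z" shows "L \<Psi> x z"
proof -
  let ?S = "{x, y, z}"
  obtain m where m: "m \<in> N \<Psi> ?S" "m \<in> ?S" using N3[of ?S \<Psi>] by blast
  have "y \<in> N \<Psi> ?S \<Longrightarrow> x \<in> N \<Psi> ?S" using L_up[of y \<Psi> ?S x] assms by auto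
  moreover have "z \<in> N \<Psi> ?S \<Longrightarrow> y \<in> N \<Psi> ?S" using L_up[of z \<Psi> ?S y] assms by auto
  ultimately have "x \<in> N \<Psi> ?S" using m by auto
  then show ?thesis using N6[of "{x, z}" ?S \<Psi>] by (auto simp: L_def)
qed

lemma L_faithful: "faithful_assignment Bel L"
proof -
  have A: "total_preorder (L \<Psi>)" for \<Psi>
    unfolding total_preorder_def using L_total L_trans by blast
  have B: "L \<Psi> w1 w2 \<and> L \<Psi> w2 w1" if "w1 \<in> MM \<Psi>" "w2 \<in> MM \<Psi>" for \<Psi> w1 w2
    using that N1 by (auto simp: L_def)
  have C: "strict (L \<Psi>) w1 w2" if a: "w1 \<in> MM \<Psi>" "w2 \<notin> MM \<Psi>" for \<Psi> w1 w2
  proof -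
    have "N \<Psi> {w2, w1} = MM \<Psi>" using a by (intro N2) auto
    then show ?thesis using a N1 by (auto simp: L_def strict_def)
  qed
  show ?thesis unfolding faithful_assignment_def using A B C by blast
qed

end


locale ctr2 = ctr Bel contr for Bel :: "'e \<Rightarrow> ('v::finite) fm set" and contr +
  fixes le :: "'e \<Rightarrow> 'v world \<Rightarrow> 'v world \<Rightarrow> bool"
  assumes fa: "faithful_assignment Bel le"
    and rep: "\<And>\<Psi> a. MM (contr \<Psi> a) = MM \<Psi> \<union> minset (models (Neg a)) (le \<Psi>)"
begin

lemma tp: "total_preorder (le \<Psi>)" using fa by (simp add: faithful_assignment_def)
lemma tot: "le \<Psi> x y \<or> le \<Psi> y x" using tp by (simp add: total_preorder_def)
lemma trans: "le \<Psi> x y \<Longrightarrow> le \<Psi> y z \<Longrightarrow> le \<Psi> x z" using tp unfolding total_preorder_def by blast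
lemma refl: "le \<Psi> x x" using tot by blast
lemma in_MM: "w1 \<in> MM \<Psi> \<Longrightarrow> le \<Psi> w1 w2"
  using fa unfolding faithful_assignment_def strict_def by blast

lemma pair: assumes "models (Neg b) = {w1, w2}"
  shows "w1 \<in> MM (contr \<Psi> b) \<longleftrightarrow> le \<Psi> w1 w2"
  using in_MM[of w1 \<Psi> w2] refl[of \<Psi> w1] unfolding rep assms minset_def by auto

definition pf :: "'v world \<Rightarrow> 'v world \<Rightarrow> 'v fm" where "pf w1 w2 = form (- {w1, w2})"
lemma pf[simp]: "models (Neg (pf w1 w2)) = {w1, w2}" by (simp add: pf_def)
lemma pf'[simp]: "models (pf w1 w2) = - {w1, w2}" by (simp add: pf_def)

lemma cr8: assumes "C8 Bel contr" "w1 \<in> models a" "w2 \<in> models a"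
  shows "le (contr \<Psi> a) w1 w2 \<longleftrightarrow> le \<Psi> w1 w2"
proof -
  have "fentails (Neg a) (pf w1 w2)" using assms(2,3) by (auto simp: fentails_def)
  then have "aeq a (Bel (contr (contr \<Psi> a) (pf w1 w2))) (Bel (contr \<Psi> (pf w1 w2)))"
    using assms(1) by (simp add: C8_def)
  then have "w1 \<in> MM (contr (contr \<Psi> a) (pf w1 w2)) \<longleftrightarrow> w1 \<in> MM (contr \<Psi> (pf w1 w2))"
    using assms(2) unfolding aeq_def by blast
  then show ?thesis using pair[OF pf] by blast
qed

lemma cr9: assumes "C9 Bel contr" "w1 \<notin> models a" "w2 \<notin> models a"
  shows "le (contr \<Psi> a) w1 w2 \<longleftrightarrow> le \<Psi> w1 w2"
proof -
  have "fentails a (pf w1 w2)" using assms(2,3) by (auto simp: fentails_def)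
  then have "aeq (Neg (pf w1 w2)) (Bel (contr (contr \<Psi> a) (pf w1 w2))) (Bel (contr \<Psi> (pf w1 w2)))"
    using assms(1) by (simp add: C9_def)
  then have "w1 \<in> MM (contr (contr \<Psi> a) (pf w1 w2)) \<longleftrightarrow> w1 \<in> MM (contr \<Psi> (pf w1 w2))"
    unfolding aeq_def pf by blast
  then show ?thesis using pair[OF pf] by blast
qed

lemma C10I: assumes "C8 Bel contr" "CR10 contr le" shows "C10 Bel contr"
  unfolding C10_def
proof (intro allI impI)
  fix \<Psi> a b g
  assume H1: "fentails (Neg a) g" and "g \<in> Bel (contr \<Psi> b)"
  then have H2: "MM \<Psi> \<union> minset (- models b) (le \<Psi>) \<subseteq> models g" by (simp add: bel_iff rep)
  have H1': "- models a \<subseteq> models g" using H1 by (simp add: fentails_def)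
  have A: "MM (contr \<Psi> a) \<subseteq> models g" using H1' H2 by (auto simp: rep minset_def)
  have "w \<in> models g" if w: "w \<in> minset (- models b) (le (contr \<Psi> a))" for w
  proof (rule ccontr)
    assume ng: "w \<notin> models g"
    then have wa: "w \<in> models a" using H1' by blast
    have "w \<in> minset (- models b) (le \<Psi>)"
      unfolding minset_def
    proof (safe)
      show "w \<in> models b \<Longrightarrow> False" using w by (simp add: minset_def)
    next
      fix w' assume w'b: "w' \<notin> models b"
      show "le \<Psi> w w'"
      proof (rule ccontr)
        assume nle: "\<not> le \<Psi> w w'"
        then have st: "strict (le \<Psi>) w' w" using tot by (auto simp: strict_def)
        have le': "le (contr \<Psi> a) w w'" using w w'b by (simp add: minset_def)
        show False
        proof (cases "w' \<in> models a")
          case True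
          then show ?thesis using cr8[OF assms(1) wa True] nle le' by blast
        next
          case False
          then have "strict (le (contr \<Psi> a)) w' w"
            using assms(2) st wa unfolding CR10_def by auto
          then show ?thesis using le' by (simp add: strict_def)
        qed
      qed
    qed
    then show False using H2 ng by blast
  qed
  then show "g \<in> Bel (contr (contr \<Psi> a) b)" using A by (auto simp: bel_iff rep[of "contr \<Psi> a" b])
qed

lemma C11I: assumes "C9 Bel contr" "CR11 contr le" shows "C11 Bel contr"
  unfolding C11_def
proof (intro allI impI)
  fix \<Psi> a b g
  assume H1: "fentails a g" and "g \<in> Bel (contr (contr \<Psi> a) b)"
  then have H2: "MM (contr \<Psi> a) \<union> minset (- models b) (le (contr \<Psi> a)) \<subseteq> models g"
    by (simp add: bel_iff rep[of "contr \<Psi> a" b])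
  have H1': "models a \<subseteq> models g" using H1 by (simp add: fentails_def)
  have A: "MM \<Psi> \<subseteq> models g" using H2 by (auto simp: rep)
  have "w \<in> models g" if w: "w \<in> minset (- models b) (le \<Psi>)" for w
  proof (rule ccontr)
    assume ng: "w \<notin> models g"
    then have wa: "w \<notin> models a" using H1' by blast
    have "w \<in> minset (- models b) (le (contr \<Psi> a))"
      unfolding minset_def
    proof (safe)
      show "w \<in> models b \<Longrightarrow> False" using w by (simp add: minset_def)
    next
      fix w' assume w'b: "w' \<notin> models b"
      have le: "le \<Psi> w w'" using w w'b by (simp add: minset_def)
      show "le (contr \<Psi> a) w w'"
      proof (cases "w' \<in> models a")
        case True
        then show ?thesis using assms(2) le wa unfolding CR11_def by auto
      next
        case False
        then show ?thesis using cr9[OF assms(1) wa False] le by blast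
      qed
    qed
    then show False using H2 ng by blast
  qed
  then show "g \<in> Bel (contr \<Psi> b)" using A by (auto simp: bel_iff rep)
qed

lemma CR10I: assumes "C10 Bel contr" shows "CR10 contr le"
  unfolding CR10_def
proof (intro allI impI)
  fix \<Psi> a w1 w2
  assume w1: "w1 \<in> models (Neg a)" and w2: "w2 \<in> models a" and st: "strict (le \<Psi>) w1 w2"
  show "strict (le (contr \<Psi> a)) w1 w2"
  proof (rule ccontr)
    assume "\<not> strict (le (contr \<Psi> a)) w1 w2"
    then have l: "le (contr \<Psi> a) w2 w1" using tot by (auto simp: strict_def)
    let ?b = "pf w2 w1" and ?g = "form (- {w2})"
    have "fentails (Neg a) ?g" using w2 by (auto simp: fentails_def)
    moreover have "?g \<in> Bel (contr \<Psi> ?b)"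
      unfolding bel_iff using pair[of "pf w2 w1" w2 w1 \<Psi>, OF pf] st by (auto simp: strict_def)
    ultimately have "?g \<in> Bel (contr (contr \<Psi> a) ?b)" using assms by (auto simp: C10_def)
    then show False
      unfolding bel_iff using pair[of "pf w2 w1" w2 w1 "contr \<Psi> a", OF pf] l by auto
  qed
qed

lemma CR11I: assumes "C11 Bel contr" shows "CR11 contr le"
  unfolding CR11_def
proof (intro allI impI)
  fix \<Psi> a w1 w2
  assume w1: "w1 \<in> models (Neg a)" and w2: "w2 \<in> models a" and l: "le \<Psi> w1 w2"
  show "le (contr \<Psi> a) w1 w2"
  proof (rule ccontr)
    assume nl: "\<not> le (contr \<Psi> a) w1 w2"
    let ?b = "pf w1 w2" and ?g = "form (- {w1})"
    have "fentails a ?g" using w1 by (auto simp: fentails_def)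
    moreover have "?g \<in> Bel (contr (contr \<Psi> a) ?b)"
      unfolding bel_iff using pair[of "pf w1 w2" w1 w2 "contr \<Psi> a", OF pf] nl by auto
    ultimately have "?g \<in> Bel (contr \<Psi> ?b)" using assms by (auto simp: C11_def)
    then show False
      unfolding bel_iff using pair[of "pf w1 w2" w1 w2 \<Psi>, OF pf] l by auto
  qed
qed

end

theorem mainTheorem8:
  fixes Bel :: "'e \<Rightarrow> ('v::finite) fm set"
    and contr :: "'e \<Rightarrow> 'v fm \<Rightarrow> 'e"
  assumes "deductively_closed_bel Bel"
    and "C1 Bel contr" and "C2 Bel contr" and "C3 Bel contr" and "C4 Bel contr"
    and "C5 Bel contr" and "C6 Bel contr" and "C7 Bel contr"
    and "C8 Bel contr" and "C9 Bel contr"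
  shows "(C10 Bel contr \<and> C11 Bel contr) \<longleftrightarrow>
         (\<exists>le. faithful_assignment Bel le \<and>
               (\<forall>\<Psi> a. modelsS (Bel (contr \<Psi> a)) =
                        modelsS (Bel \<Psi>) \<union> minset (models (Neg a)) (le \<Psi>)) \<and>
               CR10 contr le \<and> CR11 contr le)"
proof -
  interpret ctr Bel contr using assms by unfold_locales
  show ?thesis
  proof
    assume c: "C10 Bel contr \<and> C11 Bel contr"
    interpret L: ctr2 Bel contr L
      by unfold_locales (use L_faithful rep_L in auto)
    show "\<exists>le. faithful_assignment Bel le \<and>
               (\<forall>\<Psi> a. modelsS (Bel (contr \<Psi> a)) =
                        modelsS (Bel \<Psi>) \<union> minset (models (Neg a)) (le \<Psi>)) \<and>
               CR10 contr le \<and> CR11 contr le"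
      using L_faithful rep_L L.CR10I L.CR11I c by blast
  next
    assume "\<exists>le. faithful_assignment Bel le \<and>
               (\<forall>\<Psi> a. modelsS (Bel (contr \<Psi> a)) =
                        modelsS (Bel \<Psi>) \<union> minset (models (Neg a)) (le \<Psi>)) \<and>
               CR10 contr le \<and> CR11 contr le"
    then obtain le where le: "faithful_assignment Bel le"
      "\<forall>\<Psi> a. modelsS (Bel (contr \<Psi> a)) = modelsS (Bel \<Psi>) \<union> minset (models (Neg a)) (le \<Psi>)"
      "CR10 contr le" "CR11 contr le" by blast
    interpret G: ctr2 Bel contr le
      by unfold_locales (use le in auto)
    show "C10 Bel contr \<and> C11 Bel contr"
      using G.C10I G.C11I le assms by blast
  qed
qed

end
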